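(* Let $D=((a_n),(b_n))$ be an almost periodic divisor. Then there is $C_0<\infty$ such that ${\rm card}\{n:|a_n-c|\le1\}+{\rm card}\{n:|b_n-c|\le1\}<C_0$ for all $c\in\mathbb{C}$. If moreover $D$ is almost periodic with a regular indexing, then $\sup_n|a_n-b_n|<\infty$.
   Context: A divisor $D=((a_n)_{n\in\mathbb{N}},(b_n)_{n\in\mathbb{N}})$ consists of two sequences in $\mathbb{C}$ (repetitions allowed) without finite accumulation points. $\tau$ is an $\varepsilon$-almost period of $D$ if there are bijections $\sigma,\sigma':\mathbb{N}\to\mathbb{N}$ with $|a_n+\tau-a_{\sigma(n)}|<\varepsilon$ and $|b_n+\tau-b_{\sigma'(n)}|<\varepsilon$ for all $n$. $D$ is almost periodic if for every $\varepsilon>0$ there is $L$ such that every disc of radius $L$ contains an $\varepsilon$-almost period; it is almost periodic with a regular indexing if in addition these $\varepsilon$-almost periods can be chosen so that $\sigma=\sigma'$. *)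

theory Defs
  imports "HOL-Analysis.Analysis"
begin

definition no_finite_acc :: "(nat \<Rightarrow> complex) \<Rightarrow> bool" where
  "no_finite_acc a \<longleftrightarrow> (\<forall>R::real. finite {n. norm (a n) \<le> R})"

definition divisor :: "(nat \<Rightarrow> complex) \<Rightarrow> (nat \<Rightarrow> complex) \<Rightarrow> bool" where
  "divisor a b \<longleftrightarrow> no_finite_acc a \<and> no_finite_acc b"

definition almost_period :: "(nat \<Rightarrow> complex) \<Rightarrow> (nat \<Rightarrow> complex) \<Rightarrow> real \<Rightarrow> complex \<Rightarrow> bool" where
  "almost_period a b \<epsilon> \<tau> \<longleftrightarrow>
     (\<exists>\<sigma> \<sigma>'. bij \<sigma> \<and> bij \<sigma>' \<and>
        (\<forall>n. norm (a n + \<tau> - a (\<sigma> n)) < \<epsilon>) \<and>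
        (\<forall>n. norm (b n + \<tau> - b (\<sigma>' n)) < \<epsilon>))"

definition almost_period_regular :: "(nat \<Rightarrow> complex) \<Rightarrow> (nat \<Rightarrow> complex) \<Rightarrow> real \<Rightarrow> complex \<Rightarrow> bool" where
  "almost_period_regular a b \<epsilon> \<tau> \<longleftrightarrow>
     (\<exists>\<sigma>. bij \<sigma> \<and>
        (\<forall>n. norm (a n + \<tau> - a (\<sigma> n)) < \<epsilon>) \<and>
        (\<forall>n. norm (b n + \<tau> - b (\<sigma> n)) < \<epsilon>))"

definition almost_periodic_divisor :: "(nat \<Rightarrow> complex) \<Rightarrow> (nat \<Rightarrow> complex) \<Rightarrow> bool" where
  "almost_periodic_divisor a b \<longleftrightarrow>
     (\<forall>\<epsilon>>0. \<exists>L. \<forall>c. \<exists>\<tau>\<in>cball c L. almost_period a b \<epsilon> \<tau>)"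

definition almost_periodic_regular :: "(nat \<Rightarrow> complex) \<Rightarrow> (nat \<Rightarrow> complex) \<Rightarrow> bool" where
  "almost_periodic_regular a b \<longleftrightarrow>
     (\<forall>\<epsilon>>0. \<exists>L. \<forall>c. \<exists>\<tau>\<in>cball c L. almost_period_regular a b \<epsilon> \<tau>)"

end

theory Submission
  imports Defs
begin

lemma card_bound:
  fixes a :: "nat \<Rightarrow> complex"
  assumes fin: "no_finite_acc a" and bj: "bij \<sigma>"
    and ap: "\<forall>n. norm (a n + \<tau> - a (\<sigma> n)) < 1" and ct: "norm (c + \<tau>) \<le> L"
  shows "card {n. norm (a n - c) \<le> 1} \<le> card {m. norm (a m) \<le> L + 2}"
proof (rule card_inj_on_le)
  show "inj_on \<sigma> {n. norm (a n - c) \<le> 1}"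
    using bj bij_is_inj inj_on_subset by blast
  show "finite {m. norm (a m) \<le> L + 2}" using fin unfolding no_finite_acc_def by blast
  show "\<sigma> ` {n. norm (a n - c) \<le> 1} \<subseteq> {m. norm (a m) \<le> L + 2}"
  proof
    fix x assume "x \<in> \<sigma> ` {n. norm (a n - c) \<le> 1}"
    then obtain n where x: "x = \<sigma> n" and h: "norm (a n - c) \<le> 1" by auto
    have eq: "a (\<sigma> n) = - (a n + \<tau> - a (\<sigma> n)) + (a n - c) + (c + \<tau>)" by simp
    have "norm (a (\<sigma> n)) \<le> norm (a n + \<tau> - a (\<sigma> n)) + norm (a n - c) + norm (c + \<tau>)"
      by (metis eq norm_minus_cancel norm_triangle_ineq order_trans add_right_mono)
    also have "\<dots> \<le> L + 2" using ap[rule_format, of n] h ct by linarith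
    finally show "x \<in> {m. norm (a m) \<le> L + 2}" using x by simp
  qed
qed

theorem mainTheorem9:
  fixes a b :: "nat \<Rightarrow> complex"
  assumes "divisor a b"
    and "almost_periodic_divisor a b"
  shows "(\<exists>C0::real. \<forall>c::complex.
            real (card {n. norm (a n - c) \<le> 1} + card {n. norm (b n - c) \<le> 1}) < C0)
       \<and> (almost_periodic_regular a b \<longrightarrow> bdd_above (range (\<lambda>n. norm (a n - b n))))"
proof
  have fa: "no_finite_acc a" and fb: "no_finite_acc b" using assms(1) unfolding divisor_def by auto
  obtain L where L: "\<forall>c. \<exists>\<tau>\<in>cball c L. almost_period a b 1 \<tau>"
    using assms(2) unfolding almost_periodic_divisor_def by (meson zero_less_one)
  show "\<exists>C0::real. \<forall>c::complex.
            real (card {n. norm (a n - c) \<le> 1} + card {n. norm (b n - c) \<le> 1}) < C0"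
  proof (intro exI allI)
    fix c :: complex
    obtain \<tau> where t: "\<tau> \<in> cball (-c) L" and ap: "almost_period a b 1 \<tau>" using L by blast
    have ct: "norm (c + \<tau>) \<le> L" using t by (simp add: dist_norm norm_minus_commute add.commute)
    obtain \<sigma> \<sigma>' where s: "bij \<sigma>" "bij \<sigma>'" "\<forall>n. norm (a n + \<tau> - a (\<sigma> n)) < 1"
        "\<forall>n. norm (b n + \<tau> - b (\<sigma>' n)) < 1"
      using ap unfolding almost_period_def by blast
    have "card {n. norm (a n - c) \<le> 1} \<le> card {m. norm (a m) \<le> L + 2}"
      using card_bound[OF fa s(1) s(3) ct] .
    moreover have "card {n. norm (b n - c) \<le> 1} \<le> card {m. norm (b m) \<le> L + 2}"
      using card_bound[OF fb s(2) s(4) ct] .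
    ultimately show "real (card {n. norm (a n - c) \<le> 1} + card {n. norm (b n - c) \<le> 1})
        < real (card {m. norm (a m) \<le> L + 2} + card {m. norm (b m) \<le> L + 2}) + 1"
      by linarith
  qed
  show "almost_periodic_regular a b \<longrightarrow> bdd_above (range (\<lambda>n. norm (a n - b n)))"
  proof
    assume "almost_periodic_regular a b"
    then obtain L where L: "\<forall>c. \<exists>\<tau>\<in>cball c L. almost_period_regular a b 1 \<tau>"
      unfolding almost_periodic_regular_def by (meson zero_less_one)
    define S where "S = {m. norm (a m) \<le> L + 1}"
    have finS: "finite S" using fa unfolding S_def no_finite_acc_def by blast
    show "bdd_above (range (\<lambda>n. norm (a n - b n)))"
    proof (rule bdd_aboveI2)
      fix n
      obtain \<tau> where t: "\<tau> \<in> cball (-(a n)) L" and ap: "almost_period_regular a b 1 \<tau>"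
        using L by blast
      have ct: "norm (a n + \<tau>) \<le> L" using t by (simp add: dist_norm norm_minus_commute add.commute)
      obtain \<sigma> where s: "\<forall>n. norm (a n + \<tau> - a (\<sigma> n)) < 1"
          "\<forall>n. norm (b n + \<tau> - b (\<sigma> n)) < 1"
        using ap unfolding almost_period_regular_def by blast
      have eq1: "a (\<sigma> n) = - (a n + \<tau> - a (\<sigma> n)) + (a n + \<tau>)" by simp
      have "norm (a (\<sigma> n)) \<le> norm (a n + \<tau> - a (\<sigma> n)) + norm (a n + \<tau>)"
        by (metis eq1 norm_minus_cancel norm_triangle_ineq)
      then have inS: "\<sigma> n \<in> S" using s(1)[rule_format, of n] ct unfolding S_def by simp
      have eq2: "a n - b n = (a (\<sigma> n) - b (\<sigma> n)) + (a n + \<tau> - a (\<sigma> n)) - (b n + \<tau> - b (\<sigma> n))"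
        by simp
      have "norm (a n - b n) \<le> norm (a (\<sigma> n) - b (\<sigma> n)) + norm (a n + \<tau> - a (\<sigma> n))
            + norm (b n + \<tau> - b (\<sigma> n))"
        by (metis eq2 norm_triangle_ineq norm_triangle_ineq4 order_trans add_right_mono)
      also have "\<dots> \<le> norm (a (\<sigma> n) - b (\<sigma> n)) + 2"
        using s(1)[rule_format, of n] s(2)[rule_format, of n] by linarith
      also have "norm (a (\<sigma> n) - b (\<sigma> n)) \<le> (\<Sum>m\<in>S. norm (a m - b m))"
        by (rule member_le_sum[OF inS _ finS]) simp
      finally show "norm (a n - b n) \<le> (\<Sum>m\<in>S. norm (a m - b m)) + 2" by simp
    qed
  qed
qed

end
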